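(* Let $\mathcal{X}=\langle P,K,V\rangle$ be a polyhedral model, $x\in P$, and $\sigma\in K$ the unique simplex with $x\in\tilde\sigma$. For every SLCS formula $\phi$: $\mathcal{X},x\models\phi$ if and only if $\mathcal{M}(\mathcal{X}),\tilde\sigma\models\phi$.
   Context: A $d$-simplex $\sigma\subseteq\mathbb{R}^m$ is the convex hull of $d+1$ affinely independent points $v_0,\dots,v_d$ (its vertices); the simplexes spanned by subsets of the vertices (including the empty simplex) are its faces, and $\tau\preceq\sigma$ means $\tau$ is a face of $\sigma$. The relative interior of $\sigma$ is $\tilde\sigma=\{\sum_i\lambda_iv_i:\lambda_i\in(0,1],\sum_i\lambda_i=1\}$. A simplicial complex $K$ is a finite set of simplexes of $\mathbb{R}^m$ closed under taking faces and such that the intersection of any two of its simplexes is a face of both. Its polyhedron is $|K|=\bigcup K$, with the subspace topology of $\mathbb{R}^m$; $\mathcal{C}$ and $\mathcal{I}$ denote closure and interior in this space. The cells of $K$ are the sets $\tilde\sigma$ for nonempty $\sigma\in K$; they form a partition $\tilde K$ of $|K|$. A path in a space $P$ is a continuous $\pi:[0,1]\to P$; $\pi(S)=\{\pi(s):s\in S\}$. Fix a finite set $AP$ of atomic propositions. A polyhedral model is $\mathcal{X}=\langle P,K,V\rangle$ with $K$ a simplicial complex, $P=|K|$, and $V:AP\to\mathcal{P}(P)$ such that each $V(p)$ is a union of cells of $K$ ($K$ is then called coherent with the model). SLCS formulas: $\phi::=\top\mid p\mid\neg\phi\mid\phi\wedge\phi\mid\Box\phi\mid\gamma(\phi,\phi)$,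 $p\in AP$. Semantics at $x\in P$, with $[\![\phi]\!]=\{x\in P:\mathcal{X},x\models\phi\}$: $\top$ always holds; $x\models p$ iff $x\in V(p)$; Boolean connectives as usual; $x\models\Box\phi$ iff $x\in\mathcal{I}([\![\phi]\!])$; $x\models\gamma(\phi,\psi)$ iff there is a path $\pi$ in $P$ with $\pi(0)=x$, $\pi((0,1))\subseteq[\![\phi]\!]$ and $\pi(1)\in[\![\psi]\!]$. The finite Kripke model $\mathcal{M}(\mathcal{X})$ has as states the cells of $K$, accessibility relation $\tilde\sigma\,\tilde\preceq\,\tilde\tau$ iff $\sigma\preceq\tau$, and valuation $V_M(p)=\{\tilde\sigma:\tilde\sigma\subseteq V(p)\}$. A $\pm$-path in $\mathcal{M}(\mathcal{X})$ is a map $\pi:\{0,\dots,k\}\to\tilde K$ with $k\ge2$ such that $\pi(0)\,\tilde\preceq\,\pi(1)$, $\pi(k)\,\tilde\preceq\,\pi(k-1)$, and for each $i<k$ either $\pi(i)\,\tilde\preceq\,\pi(i+1)$ or $\pi(i+1)\,\tilde\preceq\,\pi(i)$. Satisfaction in $\mathcal{M}(\mathcal{X})$ at a cell $\tilde\sigma$, with $[\![\phi]\!]_M$ the set of satisfying cells: $\top$ always; $p$ iff $\tilde\sigma\in V_M(p)$; Booleans as usual; $\tilde\sigma\models\Box\phi$ iff every $\tilde\tau$ with $\tilde\sigma\,\tilde\preceq\,\tilde\tau$ satisfies $\phi$; $\tilde\sigma\models\gamma(\phi,\psi)$ iff there is a $\pm$-path $\pi:\{0,\dots,k\}\to\tilde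 K$ with $\pi(0)=\tilde\sigma$, $\pi(\{1,\dots,k-1\})\subseteq[\![\phi]\!]_M$ and $\pi(k)\in[\![\psi]\!]_M$. *)

theory Defs
  imports "HOL-Analysis.Analysis"
begin

text \<open>A simplex is the convex hull of a finite affinely independent set of points
(its vertices); the empty set is the empty simplex.\<close>
definition is_simplex :: "'a::euclidean_space set \<Rightarrow> bool" where
  "is_simplex \<sigma> \<longleftrightarrow> (\<exists>V. finite V \<and> \<not> affine_dependent V \<and> \<sigma> = convex hull V)"

definition sface :: "'a::euclidean_space set \<Rightarrow> 'a set \<Rightarrow> bool" where
  "sface \<tau> \<sigma> \<longleftrightarrow> (\<exists>V W. finite V \<and> \<not> affine_dependent V \<and> \<sigma> = convex hull V
                      \<and> W \<subseteq> V \<and> \<tau> = convex hull W)"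

text \<open>Relative interior of a simplex, as defined in the paper:
  positive barycentric combinations of its vertices.\<close>
definition cell :: "'a::euclidean_space set \<Rightarrow> 'a set" where
  "cell \<sigma> = {y. \<exists>V u. finite V \<and> \<not> affine_dependent V \<and> \<sigma> = convex hull V
                 \<and> (\<forall>v\<in>V. 0 < u v \<and> u v \<le> 1) \<and> sum u V = 1
                 \<and> (\<Sum>v\<in>V. u v *\<^sub>R v) = y}"

definition simplicial_complex :: "'a::euclidean_space set set \<Rightarrow> bool" where
  "simplicial_complex K \<longleftrightarrow> finite K \<and> (\<forall>\<sigma>\<in>K. is_simplex \<sigma>)
     \<and> (\<forall>\<sigma>\<in>K. \<forall>\<tau>. sface \<tau> \<sigma> \<longrightarrow> \<tau> \<in> K)
     \<and> (\<forall>\<sigma>\<in>K. \<forall>\<tau>\<in>K. sface (\<sigma> \<inter> \<tau>) \<sigma> \<and> sface (\<sigma> \<inter> \<tau>) \<tau>)"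

definition cells :: "'a::euclidean_space set set \<Rightarrow> 'a set set" where
  "cells K = {cell \<sigma> | \<sigma>. \<sigma> \<in> K \<and> \<sigma> \<noteq> {}}"

text \<open>Polyhedral model \<open>\<langle>|K|, K, V\<rangle>\<close>: every \<open>V p\<close> is a union of cells of \<open>K\<close>.\<close>
definition polyhedral_model :: "'a::euclidean_space set set \<Rightarrow> ('p \<Rightarrow> 'a set) \<Rightarrow> bool" where
  "polyhedral_model K V \<longleftrightarrow> simplicial_complex K
     \<and> (\<forall>p. \<exists>C. C \<subseteq> cells K \<and> V p = \<Union>C)"

datatype 'p form =
    FTop
  | FAtom 'p
  | FNeg "'p form"
  | FAnd "'p form" "'p form"
  | FBox "'p form"
  | FGamma "'p form" "'p form"

fun psem :: "'a::euclidean_space set set \<Rightarrow> ('p \<Rightarrow> 'a set) \<Rightarrow> 'p form \<Rightarrow> 'a set" where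
  "psem K V FTop = \<Union>K"
| "psem K V (FAtom p) = V p"
| "psem K V (FNeg \<phi>) = \<Union>K - psem K V \<phi>"
| "psem K V (FAnd \<phi> \<psi>) = psem K V \<phi> \<inter> psem K V \<psi>"
| "psem K V (FBox \<phi>) = (top_of_set (\<Union>K)) interior_of (psem K V \<phi>)"
| "psem K V (FGamma \<phi> \<psi>) =
     {x \<in> \<Union>K. \<exists>\<pi>. path \<pi> \<and> path_image \<pi> \<subseteq> \<Union>K \<and> \<pi> 0 = x
                 \<and> \<pi> ` {0<..<1} \<subseteq> psem K V \<phi> \<and> \<pi> 1 \<in> psem K V \<psi>}"

definition cacc :: "'a::euclidean_space set set \<Rightarrow> 'a set \<Rightarrow> 'a set \<Rightarrow> bool" where
  "cacc K c d \<longleftrightarrow> (\<exists>\<sigma>\<in>K. \<exists>\<tau>\<in>K. \<sigma> \<noteq> {} \<and> \<tau> \<noteq> {} \<and> c = cell \<sigma> \<and> d = cell \<tau> \<and> sface \<sigma> \<tau>)"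

definition pm_path :: "'a::euclidean_space set set \<Rightarrow> nat \<Rightarrow> (nat \<Rightarrow> 'a set) \<Rightarrow> bool" where
  "pm_path K k \<pi> \<longleftrightarrow> 2 \<le> k \<and> (\<forall>i\<le>k. \<pi> i \<in> cells K)
     \<and> cacc K (\<pi> 0) (\<pi> 1) \<and> cacc K (\<pi> k) (\<pi> (k - 1))
     \<and> (\<forall>i<k. cacc K (\<pi> i) (\<pi> (Suc i)) \<or> cacc K (\<pi> (Suc i)) (\<pi> i))"

fun msem :: "'a::euclidean_space set set \<Rightarrow> ('p \<Rightarrow> 'a set) \<Rightarrow> 'p form \<Rightarrow> 'a set set" where
  "msem K V FTop = cells K"
| "msem K V (FAtom p) = {c \<in> cells K. c \<subseteq> V p}"
| "msem K V (FNeg \<phi>) = cells K - msem K V \<phi>"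
| "msem K V (FAnd \<phi> \<psi>) = msem K V \<phi> \<inter> msem K V \<psi>"
| "msem K V (FBox \<phi>) = {c \<in> cells K. \<forall>d \<in> cells K. cacc K c d \<longrightarrow> d \<in> msem K V \<phi>}"
| "msem K V (FGamma \<phi> \<psi>) =
     {c \<in> cells K. \<exists>k \<pi>. pm_path K k \<pi> \<and> \<pi> 0 = c
                 \<and> (\<forall>i \<in> {1..k-1}. \<pi> i \<in> msem K V \<phi>) \<and> \<pi> k \<in> msem K V \<psi>}"

end

theory Submission
  imports Defs
begin

lemma simplex_cell: "is_simplex \<sigma> \<Longrightarrow> cell \<sigma> = rel_interior \<sigma>"
proof
  assume "is_simplex \<sigma>"
  show "cell \<sigma> \<subseteq> rel_interior \<sigma>"
  proof
    fix y assume "y \<in> cell \<sigma>"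
    then obtain W u where W: "finite W" "\<not> affine_dependent W" "\<sigma> = convex hull W"
      "\<forall>v\<in>W. 0 < u v \<and> u v \<le> 1" "sum u W = 1" "(\<Sum>v\<in>W. u v *\<^sub>R v) = y"
      unfolding cell_def by blast
    then show "y \<in> rel_interior \<sigma>" using rel_interior_convex_hull_explicit[OF W(2)] by auto
  qed
  show "rel_interior \<sigma> \<subseteq> cell \<sigma>"
  proof
    fix y assume y: "y \<in> rel_interior \<sigma>"
    from \<open>is_simplex \<sigma>\<close> obtain W where W: "finite W" "\<not> affine_dependent W" "\<sigma> = convex hull W"
      unfolding is_simplex_def by blast
    with y obtain u where u: "\<forall>v\<in>W. 0 < u v" "sum u W = 1" "(\<Sum>v\<in>W. u v *\<^sub>R v) = y"
      using rel_interior_convex_hull_explicit[OF W(2)] by auto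
    have "\<forall>v\<in>W. u v \<le> 1"
    proof
      fix v assume "v \<in> W"
      have "u v \<le> sum u W" using member_le_sum[of v W u] u(1) W(1) \<open>v\<in>W\<close> by fastforce
      then show "u v \<le> 1" using u(2) by simp
    qed
    then show "y \<in> cell \<sigma>" unfolding cell_def using W u by blast
  qed
qed

lemma sface_face_of: "sface \<tau> \<sigma> \<Longrightarrow> \<tau> face_of \<sigma>"
  unfolding sface_def using face_of_convex_hull_affine_independent by blast

lemma face_of_sface: "is_simplex \<sigma> \<Longrightarrow> \<tau> face_of \<sigma> \<Longrightarrow> sface \<tau> \<sigma>"
  unfolding sface_def is_simplex_def using face_of_convex_hull_affine_independent by blast

lemma simplex_compact: "is_simplex \<sigma> \<Longrightarrow> compact \<sigma>"
  unfolding is_simplex_def using compact_convex_hull finite_imp_compact by blast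

lemma simplex_convex: "is_simplex \<sigma> \<Longrightarrow> convex \<sigma>"
  unfolding is_simplex_def by auto

lemma simplex_closure_ri: "is_simplex \<sigma> \<Longrightarrow> closure (rel_interior \<sigma>) = \<sigma>"
  by (simp add: convex_closure_rel_interior simplex_compact simplex_convex compact_imp_closed)

lemma simplex_point_face:
  assumes "is_simplex \<sigma>" "x \<in> \<sigma>"
  shows "\<exists>\<rho>. \<rho> face_of \<sigma> \<and> \<rho> \<noteq> {} \<and> x \<in> rel_interior \<rho>"
proof -
  from assms obtain W where W: "finite W" "\<not> affine_dependent W" "\<sigma> = convex hull W"
    unfolding is_simplex_def by blast
  with assms obtain u where u: "\<forall>v\<in>W. 0 \<le> u v" "sum u W = 1" "(\<Sum>v\<in>W. u v *\<^sub>R v) = x"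
    using convex_hull_finite[of W] by auto
  define W' where "W' = {v\<in>W. 0 < u v}"
  have W'W: "W' \<subseteq> W" unfolding W'_def by auto
  have fin: "finite W'" using W(1) W'W finite_subset by blast
  have ind: "\<not> affine_dependent W'" using W(2) W'W affine_dependent_subset by blast
  have z: "\<forall>v\<in>W - W'. u v = 0" using u(1) unfolding W'_def by force
  have s1: "sum u W' = 1" using u(2) sum.mono_neutral_left[OF W(1) W'W, of u] z by simp
  have s2: "(\<Sum>v\<in>W'. u v *\<^sub>R v) = x"
    using u(3) sum.mono_neutral_left[OF W(1) W'W, of "\<lambda>v. u v *\<^sub>R v"] z by simp
  have "x \<in> rel_interior (convex hull W')"
    using rel_interior_convex_hull_explicit[OF ind] s1 s2 unfolding W'_def by auto
  moreover have "convex hull W' face_of \<sigma>"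
    using face_of_convex_hull_affine_independent[OF W(2)] W(3) W'W by blast
  ultimately show ?thesis using rel_interior_subset by blast
qed

locale sc =
  fixes K :: "'a::euclidean_space set set"
  assumes sc: "simplicial_complex K"
begin

lemma finK: "finite K" using sc unfolding simplicial_complex_def by blast

lemma simpK: "\<sigma> \<in> K \<Longrightarrow> is_simplex \<sigma>"
  using sc unfolding simplicial_complex_def by blast

lemma face_in: "\<sigma> \<in> K \<Longrightarrow> \<tau> face_of \<sigma> \<Longrightarrow> \<tau> \<in> K"
proof -
  assume a: "\<sigma> \<in> K" "\<tau> face_of \<sigma>"
  then have "sface \<tau> \<sigma>" using face_of_sface simpK by blast
  then show ?thesis using sc a(1) unfolding simplicial_complex_def by blast
qed

lemma cellK: "\<sigma> \<in> K \<Longrightarrow> cell \<sigma> = rel_interior \<sigma>"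
  using simpK simplex_cell by blast

lemma cells_eq: "cells K = {rel_interior \<sigma> | \<sigma>. \<sigma> \<in> K \<and> \<sigma> \<noteq> {}}"
proof -
  have "\<And>\<sigma>. \<sigma> \<in> K \<Longrightarrow> cell \<sigma> = rel_interior \<sigma>" using cellK .
  then show ?thesis unfolding cells_def by auto
qed

lemma int_face: "\<sigma> \<in> K \<Longrightarrow> \<tau> \<in> K \<Longrightarrow> (\<sigma> \<inter> \<tau>) face_of \<sigma>"
  using sc sface_face_of unfolding simplicial_complex_def by blast

lemma ri_unique:
  assumes "\<sigma> \<in> K" "\<tau> \<in> K" "x \<in> rel_interior \<sigma>" "x \<in> rel_interior \<tau>"
  shows "\<sigma> = \<tau>"
proof -
  have "\<sigma> \<inter> \<tau> = \<sigma>"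
    using int_face[OF assms(1,2)] face_of_disjoint_rel_interior assms(3,4) rel_interior_subset by blast
  moreover have "\<tau> \<inter> \<sigma> = \<tau>"
    using int_face[OF assms(2,1)] face_of_disjoint_rel_interior assms(3,4) rel_interior_subset by blast
  ultimately show ?thesis by blast
qed

lemma point_cell: "x \<in> \<Union>K \<Longrightarrow> \<exists>\<sigma>\<in>K. \<sigma> \<noteq> {} \<and> x \<in> rel_interior \<sigma>"
proof -
  assume "x \<in> \<Union>K"
  then obtain \<tau> where t: "\<tau> \<in> K" "x \<in> \<tau>" by blast
  then obtain \<rho> where "\<rho> face_of \<tau>" "\<rho> \<noteq> {}" "x \<in> rel_interior \<rho>"
    using simplex_point_face simpK by blast
  then show ?thesis using face_in t by blast
qed

lemma face_of_contain:
  assumes "\<tau> \<in> K" "\<rho> \<in> K" "x \<in> \<tau>" "x \<in> rel_interior \<rho>"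
  shows "\<rho> face_of \<tau>"
proof -
  obtain \<rho>' where "\<rho>' face_of \<tau>" "x \<in> rel_interior \<rho>'"
    using simplex_point_face[OF simpK[OF assms(1)] assms(3)] by blast
  moreover then have "\<rho>' \<in> K" using face_in assms(1) by blast
  ultimately show ?thesis using ri_unique assms by blast
qed

lemma ri_ne: "\<sigma> \<in> K \<Longrightarrow> \<sigma> \<noteq> {} \<Longrightarrow> rel_interior \<sigma> \<noteq> {}"
  using rel_interior_eq_empty simplex_convex simpK by blast

lemma ri_inj:
  assumes "\<sigma> \<in> K" "\<tau> \<in> K" "\<sigma> \<noteq> {}" "rel_interior \<sigma> = rel_interior \<tau>"
  shows "\<sigma> = \<tau>"
  by (metis ri_ne[OF assms(1,3)] ri_unique assms all_not_in_conv)

lemma cacc_iff: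
  assumes "\<sigma> \<in> K" "\<tau> \<in> K" "\<sigma> \<noteq> {}" "\<tau> \<noteq> {}"
  shows "cacc K (rel_interior \<sigma>) (rel_interior \<tau>) \<longleftrightarrow> \<sigma> face_of \<tau>"
proof
  assume "cacc K (rel_interior \<sigma>) (rel_interior \<tau>)"
  then obtain \<sigma>' \<tau>' where "\<sigma>' \<in> K" "\<tau>' \<in> K" "\<sigma>' \<noteq> {}" "\<tau>' \<noteq> {}"
    "rel_interior \<sigma> = rel_interior \<sigma>'" "rel_interior \<tau> = rel_interior \<tau>'" "sface \<sigma>' \<tau>'"
    unfolding cacc_def using cellK by metis
  then show "\<sigma> face_of \<tau>" using ri_inj assms sface_face_of by metis
next
  assume "\<sigma> face_of \<tau>"
  then show "cacc K (rel_interior \<sigma>) (rel_interior \<tau>)"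
    unfolding cacc_def using assms cellK face_of_sface simpK by metis
qed

lemma cells_disj: "c \<in> cells K \<Longrightarrow> d \<in> cells K \<Longrightarrow> x \<in> c \<Longrightarrow> x \<in> d \<Longrightarrow> c = d"
  unfolding cells_eq using ri_unique by blast

lemma cells_sub: "c \<in> cells K \<Longrightarrow> c \<subseteq> \<Union>K"
  unfolding cells_eq using rel_interior_subset by blast

lemma cell_of: "x \<in> \<Union>K \<Longrightarrow> \<exists>c\<in>cells K. x \<in> c"
  unfolding cells_eq using point_cell by blast

definition St :: "'a set \<Rightarrow> 'a set" where
  "St \<sigma> = \<Union>{rel_interior \<tau> | \<tau>. \<tau> \<in> K \<and> \<sigma> face_of \<tau>}"

lemma St_eq:
  assumes "\<sigma> \<in> K"
  shows "St \<sigma> = \<Union>K - \<Union>{\<tau>\<in>K. \<not> \<sigma> face_of \<tau>}"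
proof
  show "St \<sigma> \<subseteq> \<Union>K - \<Union>{\<tau>\<in>K. \<not> \<sigma> face_of \<tau>}"
  proof
    fix y assume "y \<in> St \<sigma>"
    then obtain \<tau> where t: "\<tau> \<in> K" "\<sigma> face_of \<tau>" "y \<in> rel_interior \<tau>" unfolding St_def by blast
    have "y \<in> \<Union>K" using t rel_interior_subset by blast
    moreover have "y \<notin> \<Union>{\<tau>\<in>K. \<not> \<sigma> face_of \<tau>}"
    proof
      assume "y \<in> \<Union>{\<tau>\<in>K. \<not> \<sigma> face_of \<tau>}"
      then obtain \<tau>' where "\<tau>' \<in> K" "\<not> \<sigma> face_of \<tau>'" "y \<in> \<tau>'" by blast
      then show False using face_of_contain[of \<tau>' \<tau> y] t face_of_trans by blast
    qed
    ultimately show "y \<in> \<Union>K - \<Union>{\<tau>\<in>K. \<not> \<sigma> face_of \<tau>}" by blast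
  qed
  show "\<Union>K - \<Union>{\<tau>\<in>K. \<not> \<sigma> face_of \<tau>} \<subseteq> St \<sigma>"
  proof
    fix y assume y: "y \<in> \<Union>K - \<Union>{\<tau>\<in>K. \<not> \<sigma> face_of \<tau>}"
    then obtain \<rho> where r: "\<rho> \<in> K" "y \<in> rel_interior \<rho>" using point_cell by blast
    have "\<sigma> face_of \<rho>" using y r rel_interior_subset by blast
    then show "y \<in> St \<sigma>" unfolding St_def using r by blast
  qed
qed

lemma St_open: "\<sigma> \<in> K \<Longrightarrow> openin (top_of_set (\<Union>K)) (St \<sigma>)"
proof -
  assume a: "\<sigma> \<in> K"
  have "closed (\<Union>{\<tau>\<in>K. \<not> \<sigma> face_of \<tau>})"
    using finK simpK simplex_compact compact_imp_closed by (intro closed_Union) auto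
  then have "open (- \<Union>{\<tau>\<in>K. \<not> \<sigma> face_of \<tau>})" by (simp add: open_Compl)
  then have "openin (top_of_set (\<Union>K)) (\<Union>K \<inter> - \<Union>{\<tau>\<in>K. \<not> \<sigma> face_of \<tau>})"
    by (rule openin_open_Int)
  moreover have "\<Union>K \<inter> - \<Union>{\<tau>\<in>K. \<not> \<sigma> face_of \<tau>} = St \<sigma>"
    unfolding St_eq[OF a] by blast
  ultimately show ?thesis by simp
qed

lemma St_self: "\<sigma> \<in> K \<Longrightarrow> rel_interior \<sigma> \<subseteq> St \<sigma>"
  unfolding St_def using face_of_refl simplex_convex simpK by blast

end

context sc begin

lemma cells_ne: "c \<in> cells K \<Longrightarrow> c \<noteq> {}"
  unfolding cells_eq using ri_ne by blast

lemma cells_convex: "c \<in> cells K \<Longrightarrow> convex c"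
  unfolding cells_eq using convex_rel_interior simplex_convex simpK by blast

lemma cacc_refl: "c \<in> cells K \<Longrightarrow> cacc K c c"
  unfolding cells_eq using cacc_iff face_of_refl simplex_convex simpK by blast

lemma cacc_cells: "cacc K c d \<Longrightarrow> c \<in> cells K \<and> d \<in> cells K"
  unfolding cacc_def cells_def by blast

lemma cacc_closure:
  assumes "cacc K c d"
  obtains \<tau> where "\<tau> \<in> K" "d = rel_interior \<tau>" "c \<subseteq> \<tau>" "convex \<tau>" "closure d = \<tau>"
proof -
  obtain \<sigma> \<tau> where st: "\<sigma> \<in> K" "\<tau> \<in> K" "\<sigma> \<noteq> {}" "\<tau> \<noteq> {}" "c = rel_interior \<sigma>" "d = rel_interior \<tau>"
    using cacc_cells[OF assms] unfolding cells_eq by blast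
  then have "\<sigma> face_of \<tau>" using cacc_iff assms by blast
  then have "c \<subseteq> \<tau>" using st rel_interior_subset face_of_imp_subset by blast
  then show ?thesis using that st simplex_convex simpK simplex_closure_ri by blast
qed

lemma seg:
  assumes "cacc K c d" "p \<in> c" "q \<in> d"
  shows "closed_segment p q - {p} \<subseteq> d"
proof -
  obtain \<tau> where t: "\<tau> \<in> K" "d = rel_interior \<tau>" "c \<subseteq> \<tau>" "convex \<tau>" "closure d = \<tau>"
    using cacc_closure[OF assms(1)] by blast
  have "p \<in> closure \<tau>" using t assms(2) closure_subset by blast
  then have "open_segment q p \<subseteq> d" using rel_interior_closure_convex_segment[OF t(4)] t(2) assms(3) by blast
  then show ?thesis using assms(3) unfolding open_segment_def by (auto simp: closed_segment_commute)
qed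

lemma seg2:
  assumes "cacc K c d \<or> cacc K d c" "p \<in> c" "q \<in> d"
  shows "closed_segment p q \<subseteq> c \<union> d"
  using assms seg[of c d p q] seg[of d c q p] by (auto simp: closed_segment_commute)

definition StC :: "'a set \<Rightarrow> 'a set" where
  "StC c = \<Union>{d \<in> cells K. cacc K c d}"

lemma StC_St: "\<sigma> \<in> K \<Longrightarrow> \<sigma> \<noteq> {} \<Longrightarrow> StC (rel_interior \<sigma>) = St \<sigma>"
proof -
  assume a: "\<sigma> \<in> K" "\<sigma> \<noteq> {}"
  show ?thesis unfolding StC_def St_def
  proof (intro equalityI subsetI)
    fix y assume "y \<in> \<Union>{d \<in> cells K. cacc K (rel_interior \<sigma>) d}"
    then obtain \<tau> where "\<tau> \<in> K" "\<tau> \<noteq> {}" "y \<in> rel_interior \<tau>" "cacc K (rel_interior \<sigma>) (rel_interior \<tau>)"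
      unfolding cells_eq by blast
    then show "y \<in> \<Union>{rel_interior \<tau> |\<tau>. \<tau> \<in> K \<and> \<sigma> face_of \<tau>}" using cacc_iff a by blast
  next
    fix y assume "y \<in> \<Union>{rel_interior \<tau> |\<tau>. \<tau> \<in> K \<and> \<sigma> face_of \<tau>}"
    then obtain \<tau> where t: "\<tau> \<in> K" "\<sigma> face_of \<tau>" "y \<in> rel_interior \<tau>" by blast
    then have "\<tau> \<noteq> {}" by auto
    then show "y \<in> \<Union>{d \<in> cells K. cacc K (rel_interior \<sigma>) d}"
      using t cacc_iff a unfolding cells_eq by blast
  qed
qed

lemma StC_open: "c \<in> cells K \<Longrightarrow> openin (top_of_set (\<Union>K)) (StC c)"
  unfolding cells_eq using StC_St St_open by fastforce

lemma StC_self: "c \<in> cells K \<Longrightarrow> c \<subseteq> StC c"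
  unfolding StC_def using cacc_refl by blast

lemma join_open:
  assumes "f ` {0<..1} \<subseteq> S" "g ` {0..<1} \<subseteq> S"
  shows "(f +++ g) ` {0<..<1} \<subseteq> S"
proof
  fix z assume "z \<in> (f +++ g) ` {0<..<1}"
  then obtain t where t: "t \<in> {0<..<1::real}" "z = (f +++ g) t" by blast
  show "z \<in> S"
  proof (cases "t \<le> 1/2")
    case True
    then have "z = f (2*t)" "2*t \<in> {0<..1}" using t by (auto simp: joinpaths_def)
    then show ?thesis using assms(1) by blast
  next
    case False
    then have "z = g (2*t - 1)" "2*t - 1 \<in> {0..<1}" using t by (auto simp: joinpaths_def)
    then show ?thesis using assms(2) by blast
  qed
qed

lemma join_ropen:
  assumes "f ` {0..1} \<subseteq> S" "g ` {0..<1} \<subseteq> S"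
  shows "(f +++ g) ` {0..<1} \<subseteq> S"
proof
  fix z assume "z \<in> (f +++ g) ` {0..<1}"
  then obtain t where t: "t \<in> {0..<1::real}" "z = (f +++ g) t" by blast
  show "z \<in> S"
  proof (cases "t \<le> 1/2")
    case True
    then have "z = f (2*t)" "2*t \<in> {0..1}" using t by (auto simp: joinpaths_def)
    then show ?thesis using assms(1) by blast
  next
    case False
    then have "z = g (2*t - 1)" "2*t - 1 \<in> {0..<1}" using t by (auto simp: joinpaths_def)
    then show ?thesis using assms(2) by blast
  qed
qed

lemma linepath_ne0: "t \<noteq> 0 \<Longrightarrow> linepath a b t = a \<Longrightarrow> a = b"
  unfolding linepath_def by (metis add_diff_cancel_left' diff_add_cancel scaleR_cancel_left scaleR_collapse)

lemma linepath_ne1: "t \<noteq> 1 \<Longrightarrow> linepath a b t = b \<Longrightarrow> a = b"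
  unfolding linepath_def
  by (metis (no_types, lifting) add_diff_cancel_right' diff_add_cancel diff_zero eq_iff_diff_eq_0 scaleR_cancel_left scaleR_collapse)

end

context sc begin

lemma box_lemma:
  assumes A: "A \<subseteq> cells K" and c: "c \<in> cells K" and x: "x \<in> c"
  shows "x \<in> top_of_set (\<Union>K) interior_of (\<Union>A) \<longleftrightarrow> (\<forall>d\<in>cells K. cacc K c d \<longrightarrow> d \<in> A)"
proof
  assume "x \<in> top_of_set (\<Union>K) interior_of (\<Union>A)"
  then obtain T where T: "openin (top_of_set (\<Union>K)) T" "x \<in> T" "T \<subseteq> \<Union>A"
    unfolding interior_of_def by blast
  then obtain Ob where Ob: "open Ob" "T = \<Union>K \<inter> Ob" unfolding openin_open by blast
  show "\<forall>d\<in>cells K. cacc K c d \<longrightarrow> d \<in> A"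
  proof (intro ballI impI)
    fix d assume d: "d \<in> cells K" "cacc K c d"
    obtain \<tau> where t: "\<tau> \<in> K" "d = rel_interior \<tau>" "c \<subseteq> \<tau>" "convex \<tau>" "closure d = \<tau>"
      using cacc_closure[OF d(2)] by blast
    have "x \<in> Ob \<inter> closure d" using Ob T x t by blast
    then have "Ob \<inter> d \<noteq> {}" using open_Int_closure_eq_empty[OF Ob(1)] by blast
    then obtain y where y: "y \<in> Ob" "y \<in> d" by blast
    then have "y \<in> \<Union>K" using cells_sub d(1) by blast
    then have "y \<in> \<Union>A" using y Ob T by blast
    then obtain e where "e \<in> A" "y \<in> e" by blast
    then show "d \<in> A" using cells_disj[of e d y] A d(1) y by blast
  qed
next
  assume h: "\<forall>d\<in>cells K. cacc K c d \<longrightarrow> d \<in> A"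
  have "StC c \<subseteq> \<Union>A" unfolding StC_def using h by blast
  then have "StC c \<subseteq> top_of_set (\<Union>K) interior_of (\<Union>A)"
    using interior_of_maximal StC_open[OF c] by blast
  then show "x \<in> top_of_set (\<Union>K) interior_of (\<Union>A)" using StC_self[OF c] x by blast
qed

lemma near0:
  assumes "path g" "path_image g \<subseteq> \<Union>K" "g 0 \<in> c" "c \<in> cells K"
  shows "\<exists>t0. 0 < t0 \<and> t0 \<le> 1/2 \<and> g t0 \<in> StC c"
proof -
  obtain Ob where Ob: "open Ob" "StC c = \<Union>K \<inter> Ob" using StC_open[OF assms(4)] unfolding openin_open by blast
  have "openin (top_of_set {0..1}) ({0..1} \<inter> g -` Ob)"
    using continuous_openin_preimage_gen[OF _ Ob(1)] assms(1) unfolding path_def by blast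
  moreover have "0 \<in> {0..1} \<inter> g -` Ob" using assms(3) StC_self[OF assms(4)] Ob by auto
  ultimately obtain e where e: "e > 0" "\<forall>x'\<in>{0..1}. dist x' 0 < e \<longrightarrow> x' \<in> {0..1} \<inter> g -` Ob"
    unfolding openin_euclidean_subtopology_iff by blast
  define t0 where "t0 = min (e/2) (1/2::real)"
  have t0: "0 < t0" "t0 \<le> 1/2" "t0 < e" using e(1) unfolding t0_def by auto
  then have "g t0 \<in> Ob" using e(2) by (auto simp: dist_real_def)
  moreover have "t0 \<in> {0..1}" using t0 by auto
  then have "g t0 \<in> \<Union>K" using assms(2) unfolding path_image_def by blast
  ultimately show ?thesis using t0 Ob(2) by blast
qed

lemma near1:
  assumes "path g" "path_image g \<subseteq> \<Union>K" "g 1 \<in> c" "c \<in> cells K"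
  shows "\<exists>t1. 1/2 \<le> t1 \<and> t1 < 1 \<and> g t1 \<in> StC c"
proof -
  have p: "path (reversepath g)" using assms(1) by simp
  have i: "path_image (reversepath g) \<subseteq> \<Union>K" using assms(2) by (simp only: path_image_reversepath)
  have z: "reversepath g 0 \<in> c" using assms(3) by (simp add: reversepath_def)
  obtain t0 where t0: "0 < t0" "t0 \<le> 1/2" "reversepath g t0 \<in> StC c"
    using near0[OF p i z assms(4)] by blast
  have "g (1 - t0) \<in> StC c" using t0(3) by (simp add: reversepath_def)
  moreover have "1/2 \<le> 1 - t0" "1 - t0 < 1" using t0 by auto
  ultimately show ?thesis by blast
qed

end

context sc begin

lemma gamma_pk:
  assumes A: "A \<subseteq> cells K" and B: "B \<subseteq> cells K" and c: "c \<in> cells K" and x: "x \<in> c"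
    and g: "path g" "path_image g \<subseteq> \<Union>K" "g 0 = x" "g ` {0<..<1} \<subseteq> \<Union>A" "g 1 \<in> \<Union>B"
  shows "\<exists>k \<pi>. pm_path K k \<pi> \<and> \<pi> 0 = c \<and> (\<forall>i\<in>{1..k-1}. \<pi> i \<in> A) \<and> \<pi> k \<in> B"
proof -
  obtain t0 where t0: "0 < t0" "t0 \<le> 1/2" "g t0 \<in> StC c" using near0[OF g(1,2) _ c] g(3) x by blast
  have "t0 \<in> {0<..<1}" using t0 by auto
  then have "g t0 \<in> \<Union>A" using g(4) by blast
  then obtain c0 where c0: "c0 \<in> A" "g t0 \<in> c0" by blast
  obtain c0' where "c0' \<in> cells K" "cacc K c c0'" "g t0 \<in> c0'" using t0(3) unfolding StC_def by blast
  then have cc0: "cacc K c c0" using cells_disj c0 A by blast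
  obtain b where b: "b \<in> B" "g 1 \<in> b" using g(5) by blast
  have bc: "b \<in> cells K" using b B by blast
  obtain t1 where t1: "1/2 \<le> t1" "t1 < 1" "g t1 \<in> StC b" using near1[OF g(1,2) b(2) bc] by blast
  have "t1 \<in> {0<..<1}" using t1 by auto
  then have "g t1 \<in> \<Union>A" using g(4) by blast
  then obtain d0 where d0: "d0 \<in> A" "g t1 \<in> d0" by blast
  obtain d0' where "d0' \<in> cells K" "cacc K b d0'" "g t1 \<in> d0'" using t1(3) unfolding StC_def by blast
  then have bd0: "cacc K b d0" using cells_disj d0 A by blast
  define R where "R = {(a,b). a \<in> A \<and> b \<in> A \<and> (cacc K a b \<or> cacc K b a)}"
  define Cmp where "Cmp = {d \<in> A. (c0, d) \<in> R\<^sup>*}"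
  define U1 where "U1 = \<Union>(StC ` Cmp)"
  define U2 where "U2 = \<Union>(StC ` (A - Cmp))"
  have o1: "openin (top_of_set (\<Union>K)) U1" unfolding U1_def
    using StC_open A unfolding Cmp_def by (intro openin_Union) blast
  have o2: "openin (top_of_set (\<Union>K)) U2" unfolding U2_def
    using StC_open A by (intro openin_Union) blast
  have cov: "\<Union>A \<subseteq> U1 \<union> U2"
  proof
    fix y assume "y \<in> \<Union>A"
    then obtain e where "e \<in> A" "y \<in> e" by blast
    then have "y \<in> StC e" using StC_self A by blast
    then show "y \<in> U1 \<union> U2" unfolding U1_def U2_def using \<open>e \<in> A\<close> by blast
  qed
  have dis: "\<Union>A \<inter> U1 \<inter> U2 = {}"
  proof (rule ccontr)
    assume "\<Union>A \<inter> U1 \<inter> U2 \<noteq> {}"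
    then obtain y e c1 c2 where y: "e \<in> A" "y \<in> e" "c1 \<in> Cmp" "y \<in> StC c1" "c2 \<in> A - Cmp" "y \<in> StC c2"
      unfolding U1_def U2_def by blast
    obtain e1 where "e1 \<in> cells K" "cacc K c1 e1" "y \<in> e1" using y(4) unfolding StC_def by blast
    then have ce1: "cacc K c1 e" using cells_disj y(1,2) A by blast
    obtain e2 where "e2 \<in> cells K" "cacc K c2 e2" "y \<in> e2" using y(6) unfolding StC_def by blast
    then have ce2: "cacc K c2 e" using cells_disj y(1,2) A by blast
    have "(c1, e) \<in> R" using ce1 y(1,3) unfolding R_def Cmp_def by blast
    moreover have "(e, c2) \<in> R" using ce2 y(1,5) unfolding R_def by blast
    moreover have "(c0, c1) \<in> R\<^sup>*" using y(3) unfolding Cmp_def by blast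
    ultimately have "(c0, c2) \<in> R\<^sup>*" by (meson rtrancl.rtrancl_into_rtrancl)
    then show False using y(5) unfolding Cmp_def by blast
  qed
  define S where "S = g ` {t0..t1}"
  have tsub: "{t0..t1} \<subseteq> {0..1}" "{t0..t1} \<subseteq> {0<..<1}" using t0 t1 by auto
  have conS: "connected S" unfolding S_def
    using g(1) tsub(1) unfolding path_def
    by (intro connected_continuous_image) (auto intro: continuous_on_subset)
  have SA: "S \<subseteq> \<Union>A" unfolding S_def using g(4) tsub(2) by blast
  have SK: "S \<subseteq> \<Union>K" unfolding S_def using g(2) tsub(1) unfolding path_image_def by blast
  obtain O1 where O1: "open O1" "U1 = \<Union>K \<inter> O1" using o1 unfolding openin_open by blast
  obtain O2 where O2: "open O2" "U2 = \<Union>K \<inter> O2" using o2 unfolding openin_open by blast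
  have e1: "openin (top_of_set S) (S \<inter> O1)" using O1(1) by (simp add: openin_open_Int)
  have e2: "openin (top_of_set S) (S \<inter> O2)" using O2(1) by (simp add: openin_open_Int)
  have cv: "S \<subseteq> (S \<inter> O1) \<union> (S \<inter> O2)" using SA SK cov O1 O2 by blast
  have ds: "(S \<inter> O1) \<inter> (S \<inter> O2) = {}" using SA SK dis O1 O2 by blast
  have c0Cmp: "c0 \<in> Cmp" unfolding Cmp_def using c0 by blast
  have "g t0 \<in> S" unfolding S_def using t0 t1 by auto
  moreover have "g t0 \<in> U1" unfolding U1_def using c0Cmp c0(2) StC_self A c0(1) by blast
  ultimately have ne1: "S \<inter> O1 \<noteq> {}" using O1 by blast
  have "S \<inter> O2 = {}" using connected_openin conS e1 e2 cv ds ne1 by blast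
  have "d0 \<in> Cmp"
  proof (rule ccontr)
    assume "d0 \<notin> Cmp"
    then have "g t1 \<in> U2" unfolding U2_def using d0 StC_self A by blast
    moreover have "g t1 \<in> S" unfolding S_def using t0 t1 by auto
    ultimately show False using \<open>S \<inter> O2 = {}\<close> O2 by blast
  qed
  then have "(c0, d0) \<in> R\<^sup>*" unfolding Cmp_def by blast
  then obtain n where "(c0, d0) \<in> R ^^ n" using rtrancl_power by blast
  then obtain f where f: "f 0 = c0" "f n = d0" "\<forall>i<n. (f i, f (Suc i)) \<in> R"
    using relpow_fun_conv by metis
  have fA: "\<forall>j\<le>n. f j \<in> A"
  proof (intro allI impI)
    fix j assume "j \<le> n"
    show "f j \<in> A"
    proof (cases j)
      case 0 then show ?thesis using f(1) c0 by simp
    next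
      case (Suc i) then show ?thesis using f(3) \<open>j \<le> n\<close> unfolding R_def by auto
    qed
  qed
  define \<pi> where "\<pi> = (\<lambda>i. if i = 0 then c else if i \<le> Suc n then f (i - 1) else b)"
  have p0: "\<pi> 0 = c" unfolding \<pi>_def by simp
  have pk: "\<pi> (Suc (Suc n)) = b" unfolding \<pi>_def by simp
  have pmid: "\<And>i. 1 \<le> i \<Longrightarrow> i \<le> Suc n \<Longrightarrow> \<pi> i = f (i - 1)" unfolding \<pi>_def by simp
  have midA: "\<forall>i\<in>{1..Suc (Suc n) - 1}. \<pi> i \<in> A" using pmid fA by auto
  have pc: "\<forall>i\<le>Suc (Suc n). \<pi> i \<in> cells K"
  proof (intro allI impI)
    fix i assume "i \<le> Suc (Suc n)"
    then consider "i = 0" | "1 \<le> i \<and> i \<le> Suc n" | "i = Suc (Suc n)" by linarith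
    then show "\<pi> i \<in> cells K" using p0 pk c bc midA A by cases auto
  qed
  have s0: "cacc K (\<pi> 0) (\<pi> 1)" using p0 pmid[of 1] f(1) cc0 by simp
  have sk: "cacc K (\<pi> (Suc (Suc n))) (\<pi> (Suc (Suc n) - 1))" using pk pmid[of "Suc n"] f(2) bd0 by simp
  have steps: "\<forall>i<Suc (Suc n). cacc K (\<pi> i) (\<pi> (Suc i)) \<or> cacc K (\<pi> (Suc i)) (\<pi> i)"
  proof (intro allI impI)
    fix i assume "i < Suc (Suc n)"
    then consider "i = 0" | "1 \<le> i \<and> i \<le> n" | "i = Suc n" by linarith
    then show "cacc K (\<pi> i) (\<pi> (Suc i)) \<or> cacc K (\<pi> (Suc i)) (\<pi> i)"
    proof cases
      case 1 then show ?thesis using s0 by simp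
    next
      case 2
      then have "\<pi> i = f (i - 1)" "\<pi> (Suc i) = f (Suc (i - 1))" using pmid by auto
      moreover have "i - 1 < n" using 2 by auto
      then have "(f (i - 1), f (Suc (i - 1))) \<in> R" using f(3) by blast
      ultimately show ?thesis unfolding R_def by auto
    next
      case 3 then show ?thesis using sk by simp
    qed
  qed
  have "pm_path K (Suc (Suc n)) \<pi>" unfolding pm_path_def using pc s0 sk steps by simp
  then show ?thesis using p0 pk midA b(1) by blast
qed

end

context sc begin

lemma lp_in: "t \<in> {0..1} \<Longrightarrow> linepath a b t \<in> closed_segment a b"
  using path_image_linepath[of a b] unfolding path_image_def by blast

lemma gamma_kp:
  assumes A: "A \<subseteq> cells K" and B: "B \<subseteq> cells K" and c: "c \<in> cells K" and x: "x \<in> c"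
    and pp: "pm_path K k \<pi>" "\<pi> 0 = c" "\<forall>i\<in>{1..k-1}. \<pi> i \<in> A" "\<pi> k \<in> B"
  shows "\<exists>g. path g \<and> path_image g \<subseteq> \<Union>K \<and> g 0 = x \<and> g ` {0<..<1} \<subseteq> \<Union>A \<and> g 1 \<in> \<Union>B"
proof -
  have k2: "2 \<le> k" and pc: "\<forall>i\<le>k. \<pi> i \<in> cells K" and s0: "cacc K (\<pi> 0) (\<pi> 1)"
    and sk: "cacc K (\<pi> k) (\<pi> (k - 1))"
    and st: "\<forall>i<k. cacc K (\<pi> i) (\<pi> (Suc i)) \<or> cacc K (\<pi> (Suc i)) (\<pi> i)"
    using pp(1) unfolding pm_path_def by auto
  have chain: "\<forall>p\<in>\<pi> 1. \<forall>q\<in>\<pi> j. \<exists>h. path h \<and> h 0 = p \<and> h 1 = q \<and> path_image h \<subseteq> \<Union>A"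
    if "1 \<le> j" "j \<le> k - 1" for j
    using that
  proof (induction j)
    case 0 then show ?case by simp
  next
    case (Suc j)
    show ?case
    proof (cases j)
      case 0
      then have pa: "\<pi> 1 \<in> A" using pp(3) k2 by auto
      show ?thesis
      proof (intro ballI)
        fix p q assume "p \<in> \<pi> 1" "q \<in> \<pi> (Suc j)"
        then have "closed_segment p q \<subseteq> \<pi> 1" using 0 cells_convex pa A
          by (metis One_nat_def closed_segment_subset subsetD)
        then show "\<exists>h. path h \<and> h 0 = p \<and> h 1 = q \<and> path_image h \<subseteq> \<Union>A"
        proof (intro exI[of _ "linepath p q"] conjI)
          show "linepath p q 0 = p" "linepath p q 1 = q" by (simp_all add: linepath_def)
        qed (use pa \<open>closed_segment p q \<subseteq> \<pi> 1\<close> in auto)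
      qed
    next
      case (Suc j')
      then have j1: "1 \<le> j" "j \<le> k - 1" using Suc.prems by auto
      have ja: "\<pi> j \<in> A" "\<pi> (Suc j) \<in> A" using pp(3) Suc.prems j1 by auto
      have adj: "cacc K (\<pi> j) (\<pi> (Suc j)) \<or> cacc K (\<pi> (Suc j)) (\<pi> j)" using st j1 k2 by auto
      show ?thesis
      proof (intro ballI)
        fix p q assume p: "p \<in> \<pi> 1" and q: "q \<in> \<pi> (Suc j)"
        obtain r where r: "r \<in> \<pi> j" using cells_ne ja A by blast
        obtain h where h: "path h" "h 0 = p" "h 1 = r" "path_image h \<subseteq> \<Union>A"
          using Suc.IH[OF j1] p r by blast
        have "closed_segment r q \<subseteq> \<pi> j \<union> \<pi> (Suc j)" using seg2[OF adj r q] .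
        then have "path_image (linepath r q) \<subseteq> \<Union>A" using ja by auto
        then have "path_image (h +++ linepath r q) \<subseteq> \<Union>A"
          using h(4) path_image_join_subset by blast
        moreover have "path (h +++ linepath r q)" using h by (auto simp: pathfinish_def)
        moreover have "(h +++ linepath r q) 0 = p" "(h +++ linepath r q) 1 = q"
          using h by (auto simp: joinpaths_def linepath_def)
        ultimately show "\<exists>h. path h \<and> h 0 = p \<and> h 1 = q \<and> path_image h \<subseteq> \<Union>A" by blast
      qed
    qed
  qed
  have a1: "\<pi> 1 \<in> A" "\<pi> (k - 1) \<in> A" using pp(3) k2 by auto
  obtain p where p: "p \<in> \<pi> 1" using cells_ne a1 A by blast
  obtain q where q: "q \<in> \<pi> (k - 1)" using cells_ne a1 A by blast
  have bk: "\<pi> k \<in> cells K" using pc by blast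
  obtain y where y: "y \<in> \<pi> k" using cells_ne bk by blast
  obtain h where h: "path h" "h 0 = p" "h 1 = q" "path_image h \<subseteq> \<Union>A"
  proof -
    have "1 \<le> k - 1" using k2 by simp
    then show ?thesis using chain[of "k - 1"] p q that by blast
  qed
  define l1 where "l1 = linepath x p"
  define l2 where "l2 = linepath q y"
  define g where "g = l1 +++ (h +++ l2)"
  have xc: "x \<in> \<pi> 0" using x pp(2) by simp
  have l1i: "l1 ` {0<..1} \<subseteq> \<Union>A"
  proof
    fix z assume "z \<in> l1 ` {0<..1}"
    then obtain t where t: "t \<in> {0<..1::real}" "z = linepath x p t" unfolding l1_def by blast
    have "z \<in> \<pi> 1"
    proof (cases "z = x")
      case True
      then have "x = p" using linepath_ne0[of t x p] t by auto
      then show ?thesis using True p by simp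
    next
      case False
      then have "z \<in> closed_segment x p - {x}" using lp_in[of t x p] t by auto
      then show ?thesis using seg[OF s0 xc p] by blast
    qed
    then show "z \<in> \<Union>A" using a1 by blast
  qed
  have l2i: "l2 ` {0..<1} \<subseteq> \<Union>A"
  proof
    fix z assume "z \<in> l2 ` {0..<1}"
    then obtain t where t: "t \<in> {0..<1::real}" "z = linepath q y t" unfolding l2_def by blast
    have "z \<in> \<pi> (k - 1)"
    proof (cases "z = y")
      case True
      then have "q = y" using linepath_ne1[of t q y] t by auto
      then show ?thesis using True q by simp
    next
      case False
      then have "z \<in> closed_segment y q - {y}" using lp_in[of t q y] t
        by (auto simp: closed_segment_commute)
      then show ?thesis using seg[OF sk y q] by blast
    qed
    then show "z \<in> \<Union>A" using a1 by blast
  qed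
  have hi: "h ` {0..1} \<subseteq> \<Union>A" using h(4) unfolding path_image_def .
  have gi: "g ` {0<..<1} \<subseteq> \<Union>A" unfolding g_def
    by (rule join_open[OF l1i join_ropen[OF hi l2i]])
  have ph2: "path (h +++ l2)" unfolding l2_def
    by (rule path_join_imp[OF h(1) path_linepath]) (simp add: pathfinish_def h(3))
  have "pathstart (h +++ l2) = p" using h by (simp add: pathstart_def joinpaths_def)
  then have "pathfinish (linepath x p) = pathstart (h +++ l2)" by simp
  then have pg: "path g" unfolding g_def l1_def
    by (rule path_join_imp[OF path_linepath ph2])
  have g0: "g 0 = x" unfolding g_def l1_def by (simp add: joinpaths_def linepath_def)
  have g1: "g 1 = y" unfolding g_def l2_def by (simp add: joinpaths_def linepath_def)
  have "\<pi> 0 \<subseteq> \<Union>K" "\<pi> 1 \<subseteq> \<Union>K" "\<pi> (k - 1) \<subseteq> \<Union>K" "\<pi> k \<subseteq> \<Union>K"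
    using cells_sub pc k2 by auto
  moreover have "closed_segment x p \<subseteq> \<pi> 0 \<union> \<pi> 1" using seg2[of "\<pi> 0" "\<pi> 1" x p] s0 xc p by blast
  moreover have "closed_segment q y \<subseteq> \<pi> (k - 1) \<union> \<pi> k" using seg2[of "\<pi> (k - 1)" "\<pi> k" q y] sk q y by blast
  ultimately have "path_image l1 \<subseteq> \<Union>K" "path_image l2 \<subseteq> \<Union>K" unfolding l1_def l2_def by auto
  moreover have "path_image h \<subseteq> \<Union>K" using h(4) A cells_sub by blast
  ultimately have "path_image g \<subseteq> \<Union>K" unfolding g_def
    using path_image_join_subset by (metis subset_trans Un_least)
  then show ?thesis using pg g0 g1 gi y pp(4) by blast
qed

end

context sc begin

lemma psem_sub:
  assumes hV: "\<forall>p. \<exists>C. C \<subseteq> cells K \<and> V p = \<Union>C"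
  shows "psem K V \<phi> \<subseteq> \<Union>K"
proof (induction \<phi>)
  case (FAtom p)
  then show ?case using hV cells_sub by (simp) blast
next
  case (FBox \<phi>)
  then show ?case using interior_of_subset_topspace by (metis psem.simps(5) topspace_euclidean_subtopology)
qed auto

lemma msem_sub: "msem K V \<phi> \<subseteq> cells K"
  by (induction \<phi>) auto

lemma main_ind:
  assumes hV: "\<forall>p. \<exists>C. C \<subseteq> cells K \<and> V p = \<Union>C"
  shows "\<forall>c\<in>cells K. \<forall>x\<in>c. (x \<in> psem K V \<phi> \<longleftrightarrow> c \<in> msem K V \<phi>)"
proof (induction \<phi>)
  case FTop
  then show ?case using cells_sub by auto
next
  case (FAtom p)
  obtain C where C: "C \<subseteq> cells K" "V p = \<Union>C" using hV by blast
  show ?case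
  proof (intro ballI)
    fix c x assume c: "c \<in> cells K" and x: "x \<in> c"
    have "x \<in> V p \<longleftrightarrow> c \<subseteq> V p"
    proof
      assume "x \<in> V p"
      then obtain e where "e \<in> C" "x \<in> e" using C by blast
      then have "e = c" using cells_disj C c x by blast
      then show "c \<subseteq> V p" using C \<open>e \<in> C\<close> by blast
    qed (use x in blast)
    then show "x \<in> psem K V (FAtom p) \<longleftrightarrow> c \<in> msem K V (FAtom p)" using c by simp
  qed
next
  case (FNeg \<phi>)
  show ?case
  proof (intro ballI)
    fix c x assume c: "c \<in> cells K" and x: "x \<in> c"
    have "x \<in> \<Union>K" using cells_sub c x by blast
    then show "x \<in> psem K V (FNeg \<phi>) \<longleftrightarrow> c \<in> msem K V (FNeg \<phi>)"
      using FNeg.IH c x by auto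
  qed
next
  case (FAnd \<phi>1 \<phi>2)
  then show ?case by auto
next
  case (FBox \<phi>)
  have eq: "psem K V \<phi> = \<Union>(msem K V \<phi>)"
  proof
    show "psem K V \<phi> \<subseteq> \<Union>(msem K V \<phi>)"
      using psem_sub[OF hV] cell_of FBox.IH by blast
    show "\<Union>(msem K V \<phi>) \<subseteq> psem K V \<phi>"
      using msem_sub FBox.IH by blast
  qed
  show ?case
  proof (intro ballI)
    fix c x assume c: "c \<in> cells K" and x: "x \<in> c"
    show "x \<in> psem K V (FBox \<phi>) \<longleftrightarrow> c \<in> msem K V (FBox \<phi>)"
      using box_lemma[OF msem_sub c x] c eq by simp
  qed
next
  case (FGamma \<phi> \<psi>)
  have eq1: "psem K V \<phi> = \<Union>(msem K V \<phi>)"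
  proof
    show "psem K V \<phi> \<subseteq> \<Union>(msem K V \<phi>)"
      using psem_sub[OF hV] cell_of FGamma.IH(1) by blast
    show "\<Union>(msem K V \<phi>) \<subseteq> psem K V \<phi>"
      using msem_sub FGamma.IH(1) by blast
  qed
  have eq2: "psem K V \<psi> = \<Union>(msem K V \<psi>)"
  proof
    show "psem K V \<psi> \<subseteq> \<Union>(msem K V \<psi>)"
      using psem_sub[OF hV] cell_of FGamma.IH(2) by blast
    show "\<Union>(msem K V \<psi>) \<subseteq> psem K V \<psi>"
      using msem_sub FGamma.IH(2) by blast
  qed
  show ?case
  proof (intro ballI)
    fix c x assume c: "c \<in> cells K" and x: "x \<in> c"
    have xK: "x \<in> \<Union>K" using cells_sub c x by blast
    show "x \<in> psem K V (FGamma \<phi> \<psi>) \<longleftrightarrow> c \<in> msem K V (FGamma \<phi> \<psi>)"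
    proof
      assume "x \<in> psem K V (FGamma \<phi> \<psi>)"
      then obtain g where g: "path g" "path_image g \<subseteq> \<Union>K" "g 0 = x"
        "g ` {0<..<1} \<subseteq> \<Union>(msem K V \<phi>)" "g 1 \<in> \<Union>(msem K V \<psi>)"
        using eq1 eq2 by auto
      show "c \<in> msem K V (FGamma \<phi> \<psi>)"
        using gamma_pk[OF msem_sub msem_sub c x g] c by simp
    next
      assume "c \<in> msem K V (FGamma \<phi> \<psi>)"
      then obtain k \<pi> where "pm_path K k \<pi>" "\<pi> 0 = c" "\<forall>i\<in>{1..k-1}. \<pi> i \<in> msem K V \<phi>"
        "\<pi> k \<in> msem K V \<psi>" by auto
      then obtain g where "path g" "path_image g \<subseteq> \<Union>K" "g 0 = x"
        "g ` {0<..<1} \<subseteq> \<Union>(msem K V \<phi>)" "g 1 \<in> \<Union>(msem K V \<psi>)"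
        using gamma_kp[OF msem_sub msem_sub c x] by blast
      then show "x \<in> psem K V (FGamma \<phi> \<psi>)" using xK eq1 eq2 by auto
    qed
  qed
qed

end

theorem mainTheorem12:
  fixes K :: "'a::euclidean_space set set" and V :: "'p::finite \<Rightarrow> 'a set"
    and x :: 'a and \<sigma> :: "'a set" and \<phi> :: "'p form"
  assumes "polyhedral_model K V"
    and "x \<in> \<Union>K" and "\<sigma> \<in> K" and "x \<in> cell \<sigma>"
  shows "x \<in> psem K V \<phi> \<longleftrightarrow> cell \<sigma> \<in> msem K V \<phi>"
proof -
  have sck: "sc K" using assms(1) unfolding polyhedral_model_def sc_def by blast
  have hV: "\<forall>p. \<exists>C. C \<subseteq> cells K \<and> V p = \<Union>C" using assms(1) unfolding polyhedral_model_def by blast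
  have ce: "cell \<sigma> = rel_interior \<sigma>" using sc.cellK[OF sck assms(3)] .
  then have "\<sigma> \<noteq> {}" using assms(4) by auto
  then have "cell \<sigma> \<in> cells K" using assms(3) unfolding cells_def by blast
  then show ?thesis using sc.main_ind[OF sck hV] assms(4) by blast
qed

end
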